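(* Let $\Sigma$ be a finite alphabet with at least two symbols and $z\in\{B,A\}$. The set of isolated points of $(\Sigma^{\mathbb{N}},\tau_z)$ is exactly the set $\mathrm{Ult}$ of ultimately periodic words, and $\mathrm{Ult}$ is dense in $(\Sigma^{\mathbb{N}},\tau_z)$; consequently a subset of $(\Sigma^{\mathbb{N}},\tau_z)$ is dense if and only if it contains $\mathrm{Ult}$.
   Context: $\mathrm{Ult}=\{u\cdot v^\omega: u,v\in\Sigma^*, v\neq\emptyset\}$, the ultimately periodic infinite words. A language $L\subseteq\Sigma^{\mathbb{N}}$ is $\omega$-regular if accepted by a Büchi automaton $(\Sigma,Q,Q_i,Q_f,\delta)$ (a run on $\sigma$ is $(q_n)_n$ with $q_0\in Q_i$, $(q_n,\sigma(n),q_{n+1})\in\delta$; accepting iff $q_n\in Q_f$ for infinitely many $n$). $\tau_C$ is the Cantor topology on $\Sigma^{\mathbb{N}}$; $\tau_B$ is generated by the $\omega$-regular languages; $\tau_A$ is generated by the $\tau_C$-closed $\omega$-regular languages. A point $x$ is isolated if $\{x\}$ is open. *)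

theory Defs
  imports "HOL-Analysis.Analysis" "HOL-Library.Omega_Words_Fun"
begin

definition buchi_run :: "nat set \<Rightarrow> (nat \<times> 'a \<times> nat) set \<Rightarrow> 'a word \<Rightarrow> (nat \<Rightarrow> nat) \<Rightarrow> bool" where
  "buchi_run Qi \<delta> \<sigma> r \<longleftrightarrow> r 0 \<in> Qi \<and> (\<forall>n. (r n, \<sigma> n, r (Suc n)) \<in> \<delta>)"

definition buchi_lang :: "nat set \<Rightarrow> nat set \<Rightarrow> nat set \<Rightarrow> (nat \<times> 'a \<times> nat) set \<Rightarrow> 'a word set" where
  "buchi_lang Q Qi Qf \<delta> = {\<sigma>. \<exists>r. buchi_run Qi \<delta> \<sigma> r \<and> infinite {n. r n \<in> Qf}}"

definition omega_regular :: "'a word set \<Rightarrow> bool" where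
  "omega_regular L \<longleftrightarrow> (\<exists>Q Qi Qf \<delta>. finite Q \<and> Qi \<subseteq> Q \<and> Qf \<subseteq> Q \<and>
      \<delta> \<subseteq> Q \<times> UNIV \<times> Q \<and> L = buchi_lang Q Qi Qf \<delta>)"

definition ult :: "'a word set" where
  "ult = {u \<frown> v\<^sup>\<omega> | u v. v \<noteq> []}"

definition tau_C :: "'a word topology" where
  "tau_C = topology_generated_by {{\<sigma>. \<forall>i<length w. \<sigma> i = w ! i} | w. True}"

definition tau_B :: "'a word topology" where
  "tau_B = topology_generated_by {L. omega_regular L}"

definition tau_A :: "'a word topology" where
  "tau_A = topology_generated_by {L. omega_regular L \<and> closedin tau_C L}"

end

theory Submission
  imports Defs
begin


definition fold_idx :: "nat \<Rightarrow> nat \<Rightarrow> nat \<Rightarrow> nat" where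
  "fold_idx a b n = (if n < a then n else a + (n - a) mod (b - a))"

lemma fold_idx_0: "a < b \<Longrightarrow> fold_idx a b 0 = 0"
  by (simp add: fold_idx_def)

lemma fold_idx_lt: "a < b \<Longrightarrow> fold_idx a b n < b"
proof -
  assume "a < b"
  then have "(n - a) mod (b - a) < b - a" by simp
  then have "a + (n - a) mod (b - a) < b" using \<open>a < b\<close> by linarith
  then show ?thesis using \<open>a < b\<close> by (auto simp: fold_idx_def)
qed

lemma fold_idx_Suc: "a < b \<Longrightarrow>
  fold_idx a b (Suc n) = (if Suc (fold_idx a b n) = b then a else Suc (fold_idx a b n))"
proof -
  assume ab: "a < b"
  show ?thesis
  proof (cases "n < a")
    case True
    then show ?thesis using ab by (auto simp: fold_idx_def)
  next
    case False
    then have e: "Suc n - a = Suc (n - a)" by simp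
    define q where "q = (n - a) mod (b - a)"
    have q: "q < b - a" using ab by (simp add: q_def)
    have fn: "fold_idx a b n = a + q" using False by (simp add: fold_idx_def q_def)
    have fSn: "fold_idx a b (Suc n) = a + (if Suc q = b - a then 0 else Suc q)"
      using False by (simp add: fold_idx_def e mod_Suc q_def)
    show ?thesis unfolding fn fSn using q ab by auto
  qed
qed

lemma fold_idx_fix: "a \<le> p \<Longrightarrow> p < b \<Longrightarrow> fold_idx a b (p + k * (b - a)) = p"
proof -
  assume h: "a \<le> p" "p < b"
  have e: "p + k * (b - a) - a = (p - a) + k * (b - a)" using h by simp
  have "(p - a) mod (b - a) = p - a" using h by simp
  then have "(p + k * (b - a) - a) mod (b - a) = p - a" unfolding e by simp
  then show ?thesis using h by (auto simp: fold_idx_def)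
qed

lemma fold_idx_idem: "a < b \<Longrightarrow> fold_idx a b (fold_idx a b n) = fold_idx a b n"
  by (auto simp: fold_idx_def)

lemma fold_word_ult:
  assumes "a < b"
  shows "(\<lambda>n. x (fold_idx a b n)) = prefix a x \<frown> (x [a \<rightarrow> b])\<^sup>\<omega>"
proof
  fix n
  show "x (fold_idx a b n) = (prefix a x \<frown> (x [a \<rightarrow> b])\<^sup>\<omega>) n"
  proof (cases "n < a")
    case True then show ?thesis by (simp add: fold_idx_def)
  next
    case False
    have "(n - a) mod (b - a) < b - a" using assms by simp
    then show ?thesis using False assms by (simp add: fold_idx_def)
  qed
qed

lemma fold_word_in_ult: "a < b \<Longrightarrow> (\<lambda>n. x (fold_idx a b n)) \<in> ult"
  proof -
  assume ab: "a < b"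
  have "x [a \<rightarrow> b] \<noteq> []" using ab subsequence_empty[of x a b] by simp
  then show ?thesis unfolding ult_def using fold_word_ult[OF ab, of x] by blast
qed

lemma fold_run:
  assumes ab: "a < b" and rab: "r a = r b"
    and tr: "\<forall>n. (r n, x n, r (Suc n)) \<in> \<delta>"
  shows "(r (fold_idx a b n), x (fold_idx a b n), r (fold_idx a b (Suc n))) \<in> \<delta>"
proof (cases "Suc (fold_idx a b n) = b")
  case True
  then have "r (fold_idx a b (Suc n)) = r (Suc (fold_idx a b n))"
    using fold_idx_Suc[OF ab, of n] rab by simp
  then show ?thesis using tr by metis
next
  case False
  then show ?thesis using fold_idx_Suc[OF ab, of n] tr by simp
qed

lemma fold_acc:
  assumes ab: "a \<le> p" "p < b" and acc: "r p \<in> Qf"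
  shows "infinite {n. r (fold_idx a b n) \<in> Qf}"
proof -
  have inj: "inj (\<lambda>k. p + k * (b - a))" using ab by (auto intro!: injI)
  have "range (\<lambda>k. p + k * (b - a)) \<subseteq> {n. r (fold_idx a b n) \<in> Qf}"
    using fold_idx_fix[OF ab] acc by auto
  moreover have "infinite (range (\<lambda>k. p + k * (b - a)))"
    using inj by (simp add: range_inj_infinite)
  ultimately show ?thesis using finite_subset by blast
qed

lemma next_N:
  "finite F \<Longrightarrow> \<forall>L\<in>F. infinite {n. P L n} \<Longrightarrow> \<exists>N>(s::nat). \<forall>L\<in>F. \<exists>p. s \<le> p \<and> p < N \<and> P L p"
proof (induction F rule: finite_induct)
  case empty
  show ?case by (rule exI[of _ "Suc s"]) simp
next
  case (insert L F)
  have IHp: "\<forall>L\<in>F. infinite {n. P L n}" using insert.prems by simp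
  obtain N where N: "N > s" "\<forall>L\<in>F. \<exists>p. s \<le> p \<and> p < N \<and> P L p"
    using insert.IH[OF IHp] by blast
  from insert.prems have "infinite {n. P L n}" by simp
  then have "\<exists>p\<ge>s. p \<in> {n. P L n}" unfolding infinite_nat_iff_unbounded_le by blast
  then obtain p where p: "p \<ge> s" "P L p" by blast
  have "\<forall>L'\<in>insert L F. \<exists>p'. s \<le> p' \<and> p' < max N (Suc p) \<and> P L' p'"
  proof
    fix L' assume "L' \<in> insert L F"
    then show "\<exists>p'. s \<le> p' \<and> p' < max N (Suc p) \<and> P L' p'"
    proof
      assume "L' = L" then show ?thesis using p by (intro exI[of _ p]) auto
    next
      assume "L' \<in> F"
      then obtain p' where "s \<le> p'" "p' < N" "P L' p'" using N(2) by blast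
      then show ?thesis by (intro exI[of _ p']) auto
    qed
  qed
  moreover have "max N (Suc p) > s" using N(1) by simp
  ultimately show ?case by blast
qed

lemma checkpoints:
  fixes r :: "'b \<Rightarrow> nat \<Rightarrow> nat"
  assumes fin: "finite F" and finQ: "\<forall>L\<in>F. finite (Q L)" and inQ: "\<forall>L\<in>F. \<forall>n. r L n \<in> Q L"
    and inf: "\<forall>L\<in>F. infinite {n. r L n \<in> Qf L}"
  shows "\<exists>a b. a < b \<and> (\<forall>L\<in>F. r L a = r L b \<and> (\<exists>p. a \<le> p \<and> p < b \<and> r L p \<in> Qf L))"
proof -
  have "\<forall>s. \<exists>N>s. \<forall>L\<in>F. \<exists>p. s \<le> p \<and> p < N \<and> r L p \<in> Qf L"
    using next_N[OF fin, of "\<lambda>L n. r L n \<in> Qf L"] inf by blast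
  then obtain g where g: "\<And>s. g s > s" "\<And>s. \<forall>L\<in>F. \<exists>p. s \<le> p \<and> p < g s \<and> r L p \<in> Qf L"
    by metis
  define t where "t i = (g ^^ i) 0" for i
  have tS: "t (Suc i) = g (t i)" for i by (simp add: t_def)
  have tS': "t n < t (Suc n)" for n using g(1) tS by simp
  have tmono: "i < j \<Longrightarrow> t i < t j" for i j
    by (rule lift_Suc_mono_less[of t, OF tS'])
  define h where "h i = restrict (\<lambda>L. r L (t i)) F" for i
  have "range h \<subseteq> PiE F Q" using inQ by (auto simp: h_def)
  moreover have "finite (PiE F Q)" using finite_PiE[OF fin] finQ by auto
  ultimately have "finite (range h)" using finite_subset by blast
  then have "\<not> inj h" using range_inj_infinite by blast
  then obtain i j where ij: "i \<noteq> j" "h i = h j" unfolding inj_def by blast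
  have "\<exists>i j. i < j \<and> h i = h j"
    using ij by (metis linorder_neqE_nat)
  then obtain i j where ij: "i < j" "h i = h j" by blast
  have eq: "r L (t i) = r L (t j)" if "L \<in> F" for L
    using fun_cong[OF ij(2), of L] that by (simp add: h_def)
  have le: "t (Suc i) \<le> t j"
  proof (cases "Suc i = j")
    case True then show ?thesis by simp
  next
    case False then have "Suc i < j" using ij(1) by simp
    then show ?thesis using tmono by (simp add: less_imp_le)
  qed
  have "\<forall>L\<in>F. r L (t i) = r L (t j) \<and> (\<exists>p. t i \<le> p \<and> p < t j \<and> r L p \<in> Qf L)"
  proof
    fix L assume L: "L \<in> F"
    obtain p where p: "t i \<le> p" "p < g (t i)" "r L p \<in> Qf L" using g(2)[of "t i"] L by blast
    have "p < t j" using p(2) le tS[of i] by simp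
    then show "r L (t i) = r L (t j) \<and> (\<exists>p. t i \<le> p \<and> p < t j \<and> r L p \<in> Qf L)"
      using eq[OF L] p by blast
  qed
  then show ?thesis using tmono[OF ij(1)] by blast
qed



definition good :: "'a word \<Rightarrow> 'a word set \<Rightarrow> nat set \<times> nat set \<times> nat set \<times> (nat \<times> 'a \<times> nat) set \<times> (nat \<Rightarrow> nat) \<Rightarrow> bool" where
  "good x L A \<longleftrightarrow> finite (fst A) \<and> (\<forall>n. snd (snd (snd (snd A))) n \<in> fst A)
     \<and> buchi_run (fst (snd A)) (fst (snd (snd (snd A)))) x (snd (snd (snd (snd A))))
     \<and> infinite {n. snd (snd (snd (snd A))) n \<in> fst (snd (snd A))}
     \<and> L = buchi_lang (fst A) (fst (snd A)) (fst (snd (snd A))) (fst (snd (snd (snd A))))"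

lemma good_ex:
  assumes "omega_regular L" "x \<in> L"
  shows "\<exists>A. good x L A"
proof -
  obtain Q Qi Qf \<delta> where aut: "finite Q" "Qi \<subseteq> Q" "Qf \<subseteq> Q" "\<delta> \<subseteq> Q \<times> UNIV \<times> Q"
    "L = buchi_lang Q Qi Qf \<delta>" using assms(1) unfolding omega_regular_def by blast
  then obtain r where r: "buchi_run Qi \<delta> x r" "infinite {n. r n \<in> Qf}"
    using assms(2) unfolding buchi_lang_def by blast
  have "r n \<in> Q" for n
  proof (cases n)
    case 0 then show ?thesis using r aut unfolding buchi_run_def by auto
  next
    case (Suc m)
    have "(r m, x m, r (Suc m)) \<in> \<delta>" using r unfolding buchi_run_def by blast
    then show ?thesis using aut(4) Suc by blast
  qed
  then have "good x L (Q, Qi, Qf, \<delta>, r)" unfolding good_def using aut r by simp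
  then show ?thesis by blast
qed

lemma pump:
  assumes fin: "finite F" and reg: "\<forall>L\<in>F. omega_regular L" and x: "x \<in> \<Inter>F"
  shows "\<exists>y\<in>ult. y \<in> \<Inter>F"
proof -
  have "\<forall>L\<in>F. \<exists>A. good x L A" using good_ex reg x by blast
  then obtain A where A: "\<forall>L\<in>F. good x L (A L)"
    by (rule bchoice[elim_format]) blast
  define Q where "Q L = fst (A L)" for L
  define Qi where "Qi L = fst (snd (A L))" for L
  define Qf where "Qf L = fst (snd (snd (A L)))" for L
  define D where "D L = fst (snd (snd (snd (A L))))" for L
  define r where "r L = snd (snd (snd (snd (A L))))" for L
  have gL: "good x L (A L)" if "L \<in> F" for L using A that by blast
  have g1: "finite (Q L)" if "L \<in> F" for L
    using gL[OF that] unfolding good_def Q_def by - (elim conjE, assumption)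
  have g2: "\<forall>n. r L n \<in> Q L" if "L \<in> F" for L
    using gL[OF that] unfolding good_def Q_def r_def by - (elim conjE, assumption)
  have g3: "buchi_run (Qi L) (D L) x (r L)" if "L \<in> F" for L
    using gL[OF that] unfolding good_def Qi_def D_def r_def by - (elim conjE, assumption)
  have g4: "infinite {n. r L n \<in> Qf L}" if "L \<in> F" for L
    using gL[OF that] unfolding good_def Qf_def r_def by - (elim conjE, assumption)
  have g5: "L = buchi_lang (Q L) (Qi L) (Qf L) (D L)" if "L \<in> F" for L
    using gL[OF that] unfolding good_def Q_def Qi_def Qf_def D_def by - (elim conjE, assumption)
  have c1: "\<forall>L\<in>F. finite (Q L)" "\<forall>L\<in>F. \<forall>n. r L n \<in> Q L" "\<forall>L\<in>F. infinite {n. r L n \<in> Qf L}"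
    using g1 g2 g4 by blast+
  obtain a b where ab: "a < b" and
    P: "\<forall>L\<in>F. r L a = r L b \<and> (\<exists>p. a \<le> p \<and> p < b \<and> r L p \<in> Qf L)"
    using checkpoints[OF fin c1] by blast
  define y where "y = (\<lambda>n. x (fold_idx a b n))"
  have "y \<in> ult" unfolding y_def by (rule fold_word_in_ult[OF ab])
  moreover have "y \<in> L" if L: "L \<in> F" for L
  proof -
    have run: "buchi_run (Qi L) (D L) x (r L)" by (rule g3[OF L])
    have LL: "L = buchi_lang (Q L) (Qi L) (Qf L) (D L)" by (rule g5[OF L])
    obtain p where p: "a \<le> p" "p < b" "r L p \<in> Qf L" using P L by blast
    have rab: "r L a = r L b" using P L by blast
    have tr: "\<forall>n. (r L n, x n, r L (Suc n)) \<in> D L" using run unfolding buchi_run_def by blast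
    have "buchi_run (Qi L) (D L) y (\<lambda>n. r L (fold_idx a b n))"
      unfolding buchi_run_def y_def
    proof
      show "r L (fold_idx a b 0) \<in> Qi L" using run ab by (simp add: fold_idx_0 buchi_run_def)
      show "\<forall>n. (r L (fold_idx a b n), x (fold_idx a b n), r L (fold_idx a b (Suc n))) \<in> D L"
        using fold_run[OF ab rab tr] by blast
    qed
    moreover have "infinite {n. r L (fold_idx a b n) \<in> Qf L}"
      using fold_acc[OF p(1,2), of "r L" "Qf L"] p(3) by blast
    ultimately have yM: "y \<in> buchi_lang (Q L) (Qi L) (Qf L) (D L)" unfolding buchi_lang_def by blast
    show ?thesis by (subst LL) (rule yM)
  qed
  ultimately show ?thesis by blast
qed

lemma univ_regular: "omega_regular (UNIV :: 'a word set)"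
proof -
  let ?D = "{0::nat} \<times> (UNIV::'a set) \<times> {0::nat}"
  have "\<sigma> \<in> buchi_lang {0} {0} {0} ?D" for \<sigma> :: "'a word"
  proof -
    have 1: "buchi_run {0} ?D \<sigma> (\<lambda>_. 0)"
      unfolding buchi_run_def by simp
    have "{n::nat. (\<lambda>_. 0::nat) n \<in> {0}} = UNIV" by simp
    then have 2: "infinite {n::nat. (\<lambda>_. 0::nat) n \<in> {0}}" by simp
    show ?thesis unfolding buchi_lang_def using 1 2 by (intro CollectI exI[of _ "\<lambda>_. 0::nat"] conjI)
  qed
  then have e: "UNIV = buchi_lang {0} {0} {0} ?D" by blast
  have "finite {0::nat}" "{0::nat} \<subseteq> {0}" "?D \<subseteq> {0} \<times> UNIV \<times> {0}" by auto
  then show ?thesis unfolding omega_regular_def using e by blast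
qed

lemma singleton_regular:
  assumes "z \<in> ult" shows "omega_regular {z}"
proof -
  obtain u v where z: "z = u \<frown> v\<^sup>\<omega>" "v \<noteq> []" using assms unfolding ult_def by blast
  define a where "a = length u"
  define b where "b = length u + length v"
  have ab: "a < b" using z(2) by (simp add: a_def b_def)
  define f where "f = fold_idx a b"
  have zf: "z (f n) = z n" for n
  proof (cases "n < a")
    case True then show ?thesis by (simp add: f_def fold_idx_def)
  next
    case False
    have lt: "(n - a) mod (b - a) < b - a" using ab by simp
    have bma: "b - a = length v" by (simp add: a_def b_def)
    show ?thesis using False lt z unfolding f_def fold_idx_def bma
      by (simp add: a_def)
  qed
  define \<delta> where "\<delta> = {(f k, z k, f (Suc k)) | k. True}"
  have fS: "f (Suc k) = (if Suc (f k) = b then a else Suc (f k))" for k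
    unfolding f_def by (rule fold_idx_Suc[OF ab])
  have "{z} = buchi_lang {..<b} {0} {..<b} \<delta>"
  proof
    have "f 0 = 0" unfolding f_def using fold_idx_0[OF ab] .
    moreover have "\<forall>n. (f n, z n, f (Suc n)) \<in> \<delta>" unfolding \<delta>_def by blast
    ultimately have "buchi_run {0} \<delta> z f"
      unfolding buchi_run_def by simp
    moreover have "{n. f n \<in> {..<b}} = UNIV"
      using fold_idx_lt[OF ab] by (auto simp: f_def)
    ultimately show "{z} \<subseteq> buchi_lang {..<b} {0} {..<b} \<delta>"
      unfolding buchi_lang_def by auto
  next
    show "buchi_lang {..<b} {0} {..<b} \<delta> \<subseteq> {z}"
    proof
      fix \<sigma> assume "\<sigma> \<in> buchi_lang {..<b} {0} {..<b} \<delta>"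
      then obtain r where r: "r 0 = 0" "\<And>n. (r n, \<sigma> n, r (Suc n)) \<in> \<delta>"
        unfolding buchi_lang_def buchi_run_def by auto
      have step: "r n = f n \<Longrightarrow> \<sigma> n = z n \<and> r (Suc n) = f (Suc n)" for n
      proof -
        assume rn: "r n = f n"
        from r(2)[of n] obtain k where k: "r n = f k" "\<sigma> n = z k" "r (Suc n) = f (Suc k)"
          unfolding \<delta>_def by auto
        have fk: "f k = f n" using k rn by simp
        have "\<sigma> n = z n" using k(2) zf[of k] zf[of n] fk by simp
        moreover have "r (Suc n) = f (Suc n)" using k(3) fS[of k] fS[of n] fk by simp
        ultimately show ?thesis by simp
      qed
      have f0: "f 0 = 0" unfolding f_def using fold_idx_0[OF ab] .
      have rf: "r n = f n" for n
      proof (induction n)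
        case 0 then show ?case using r(1) f0 by simp
      next
        case (Suc n) then show ?case using step by blast
      qed
      have "\<sigma> = z" by (rule ext) (use step rf in blast)
      then show "\<sigma> \<in> {z}" by simp
    qed
  qed
  moreover have "\<delta> \<subseteq> {..<b} \<times> UNIV \<times> {..<b}"
    using fold_idx_lt[OF ab] unfolding \<delta>_def f_def by auto
  moreover have "finite {..<b}" "{0} \<subseteq> {..<b}" "{..<b} \<subseteq> {..<b}" using ab by auto
  ultimately show ?thesis unfolding omega_regular_def by blast
qed



lemma gen_basic:
  "generate_topology_on S U \<Longrightarrow> x \<in> U \<Longrightarrow> \<exists>F. finite F \<and> F \<subseteq> S \<and> x \<in> \<Inter>F \<and> \<Inter>F \<subseteq> U"
proof (induction arbitrary: x rule: generate_topology_on.induct)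
  case Empty then show ?case by simp
next
  case (Int a b)
  then obtain F1 F2 where "finite F1 \<and> F1 \<subseteq> S \<and> x \<in> \<Inter>F1 \<and> \<Inter>F1 \<subseteq> a"
    "finite F2 \<and> F2 \<subseteq> S \<and> x \<in> \<Inter>F2 \<and> \<Inter>F2 \<subseteq> b" by (meson IntD1 IntD2)
  then show ?case by (intro exI[of _ "F1 \<union> F2"]) auto
next
  case (UN K)
  from UN.prems obtain k where k: "k \<in> K" "x \<in> k" by (rule UnionE)
  from UN.IH[OF k] obtain F where F: "finite F \<and> F \<subseteq> S \<and> x \<in> \<Inter>F \<and> \<Inter>F \<subseteq> k" ..
  have "\<Inter>F \<subseteq> \<Union>K" using F k(1) by - (elim conjE, blast)
  then show ?case using F by - (rule exI[of _ F], elim conjE, intro conjI, assumption+)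
next
  case (Basis s)
  then show ?case by (intro exI[of _ "{s}"]) auto
qed

lemma general:
  fixes S :: "'a word set set" and T :: "'a word topology"
  assumes Sreg: "S \<subseteq> {L. omega_regular L}" and US: "UNIV \<in> S" and sing: "\<forall>z\<in>ult. {z} \<in> S"
    and T: "T = topology_generated_by S"
  shows "{x. openin T {x}} = ult
       \<and> T closure_of ult = UNIV
       \<and> (\<forall>D. T closure_of D = UNIV \<longleftrightarrow> ult \<subseteq> D)"
proof -
  have top: "topspace T = UNIV" unfolding T topology_generated_by_topspace using US by blast
  have dense: "\<exists>y\<in>ult. y \<in> U" if oU: "openin T U" and xU: "x \<in> U" for U x
  proof -
    have g: "generate_topology_on S U" using oU unfolding T openin_topology_generated_by_iff .
    obtain F where F0: "finite F \<and> F \<subseteq> S \<and> x \<in> \<Inter>F \<and> \<Inter>F \<subseteq> U"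
      using gen_basic[OF g xU] ..
    have F: "finite F" "F \<subseteq> S" "x \<in> \<Inter>F" "\<Inter>F \<subseteq> U" using F0 by - (elim conjE, assumption)+
    then obtain y where "y \<in> ult" "y \<in> \<Inter>F" using pump[OF F(1) _ F(3)] Sreg by blast
    then show ?thesis using F(4) by blast
  qed
  have opn: "openin T {z}" if "z \<in> ult" for z
    unfolding T by (rule topology_generated_by_Basis) (use sing that in blast)
  have 1: "{x. openin T {x}} = ult"
  proof
    show "{x. openin T {x}} \<subseteq> ult" using dense by blast
    show "ult \<subseteq> {x. openin T {x}}" using opn by blast
  qed
  have 2: "T closure_of ult = UNIV"
  proof -
    have "x \<in> T closure_of ult" for x
      unfolding in_closure_of top using dense by blast
    then show ?thesis by blast
  qed
  have 3: "T closure_of D = UNIV \<longleftrightarrow> ult \<subseteq> D" for D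
  proof
    assume cl: "T closure_of D = UNIV"
    show "ult \<subseteq> D"
    proof
      fix z :: "'a word" assume z: "z \<in> ult"
      have "z \<in> T closure_of D" using cl by simp
      then show "z \<in> D" using opn[OF z] by (auto simp: in_closure_of)
    qed
  next
    assume "ult \<subseteq> D"
    then have "T closure_of ult \<subseteq> T closure_of D" by (rule closure_of_mono)
    then show "T closure_of D = UNIV" using 2 by auto
  qed
  show ?thesis using 1 2 3 by blast
qed

lemma tauC_top: "topspace (tau_C :: 'a word topology) = UNIV"
proof -
  have "(UNIV :: 'a word set) \<in> {{\<sigma>. \<forall>i<length w. \<sigma> i = w ! i} | w. True}"
    by (intro CollectI exI[of _ "[]"]) auto
  then show ?thesis unfolding tau_C_def by auto
qed

lemma tauC_closed_singleton: "closedin (tau_C :: 'a word topology) {z}"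
proof -
  have "openin tau_C (UNIV - {z})"
  proof (subst openin_subopen, intro ballI)
    fix y assume "y \<in> UNIV - {z}"
    then obtain i where i: "y i \<noteq> z i" by auto
    define w where "w = prefix (Suc i) y"
    define C where "C = {\<sigma>. \<forall>i<length w. \<sigma> i = w ! i}"
    have "openin tau_C C" unfolding tau_C_def C_def
      by (rule topology_generated_by_Basis) blast
    moreover have "y \<in> C" by (simp add: C_def w_def del: subseq_to_Suc)
    moreover have "z \<notin> C" using i by (auto simp: C_def w_def simp del: subseq_to_Suc)
    ultimately show "\<exists>T. openin tau_C T \<and> y \<in> T \<and> T \<subseteq> UNIV - {z}" by blast
  qed
  then show ?thesis by (simp add: closedin_def tauC_top)
qed

theorem mainTheorem14:
  fixes T :: "('a::finite) word topology"
  assumes "CARD('a) \<ge> 2"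
    and "T = tau_B \<or> T = tau_A"
  shows "{x. openin T {x}} = ult
       \<and> T closure_of ult = UNIV
       \<and> (\<forall>D. T closure_of D = UNIV \<longleftrightarrow> ult \<subseteq> D)"
  using assms(2)
proof
  assume "T = tau_B"
  then show ?thesis
    by (intro general[of "{L. omega_regular L}"]) (auto simp: tau_B_def univ_regular singleton_regular)
next
  assume "T = tau_A"
  have "closedin tau_C (UNIV :: 'a word set)" using tauC_top closedin_topspace by metis
  then show ?thesis using \<open>T = tau_A\<close>
    by (intro general[of "{L. omega_regular L \<and> closedin tau_C L}"]) (auto simp: tau_A_def univ_regular singleton_regular tauC_closed_singleton)
qed

end
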